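(* In Setting B, suppose Assumptions B1 and B2 hold. Then for any $t\in[K]$, $x\in X$, $z\in Z$, $$(1-\beta_1)\sum_{j=1}^t\mathbb{E}[\langle x^j-x,u^j\rangle]\sum_{k=j}^t\alpha_k\beta_1^{k-j}\le\frac{n\theta B_x^2}{2}+\frac{\sqrt n(\theta^2+M_x^2)\sum_{j=1}^t\alpha_j^2}{2(1-\beta_1)^2(1-\beta_2)^{1/2}\theta},$$ $$(1-\beta_1)\sum_{j=1}^t\mathbb{E}[\langle z^j-z,w^j\rangle]\sum_{k=j}^t\rho_k\beta_1^{k-j}\ge-\frac{m\theta B_z^2}{2}-\frac{\sqrt m(\theta^2+M_z^2)\sum_{j=1}^t\rho_j^2}{2(1-\beta_1)^2(1-\beta_2)^{1/2}\theta}.$$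
   Context: Setting B. Problem: $\min_{x\in X}\max_{z\in Z}\mathcal L(x,z)$, $\mathcal L(x,z)=\mathbb{E}_\xi[L(x,z;\xi)]$, where $X\subseteq\mathbb{R}^n$ and $Z\subseteq\mathbb{R}^m$ are compact convex sets and $\mathcal L$ is convex in $x\in X$ and concave in $z\in Z$. Vector operations (squares, square roots, division, max) are elementwise with convention $0/0=0$; for $v\ge0$, $\|x\|_v^2=\sum_iv_ix_i^2$ and $\mathrm{proj}_{S,v}(y)=\arg\min_{s\in S}\|s-y\|_v^2$; $\|\cdot\|$ is the Euclidean norm. Algorithm APriAD: fix $K$, $\beta_1,\beta_2\in(0,1)$, $\theta>0$, non-increasing positive step sizes $\{\alpha_k\}_{k=1}^K$ and $\{\rho_k\}_{k=1}^K$. Choose $x^1\in X$, $z^1\in Z$, and $m^0=v^0=\hat v^0=0\in\mathbb{R}^{n+m}$; write any vector $y\in\mathbb{R}^{n+m}$ as $(y_x,y_z)$ with $y_x\in\mathbb{R}^n$, $y_z\in\mathbb{R}^m$. For $k=1,\dots,K$: obtain a random stochastic subgradient $g^k=(u^k,w^k)$ of $\mathcal L$ at $(x^k,z^k)$; set $m^k=\beta_1m^{k-1}+(1-\beta_1)g^k$; $\hat g^k=\big(u^k/\max\{1,\|u^k\|/\theta\},\,w^k/\max\{1,\|w^k\|/\theta\}\big)$; $v^k=\beta_2v^{k-1}+(1-\beta_2)(\hat g^k)^2$; $\hat v^k=\max\{\hat v^{k-1},v^k\}$; $x^{k+1}=\mathrm{proj}_{X,(\hat v^k_x)^{1/2}}\big(x^k-\alpha_km^k_x/(\hat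 v^k_x)^{1/2}\big)$; $z^{k+1}=\mathrm{proj}_{Z,(\hat v^k_z)^{1/2}}\big(z^k+\rho_km^k_z/(\hat v^k_z)^{1/2}\big)$. $\mathcal H^k$ is the history $\{x^1,z^1,\dots,x^k,z^k\}$. Assumption B1: there are $B_x,B_z$ with $\|x_1-x_2\|_\infty\le B_x$ for all $x_1,x_2\in X$ and $\|z_1-z_2\|_\infty\le B_z$ for all $z_1,z_2\in Z$. Assumption B2: there are $M_x,M_z$ such that for all $k\in[K]$: $\mathbb{E}[u^k\mid\mathcal H^k]\in\partial_x\mathcal L(x^k,z^k)$, $\mathbb{E}[\|u^k\|^2]\le M_x^2$, $\mathbb{E}[w^k\mid\mathcal H^k]\in\partial_z\mathcal L(x^k,z^k)$ (superdifferential of the concave function $\mathcal L(x^k,\cdot)$), $\mathbb{E}[\|w^k\|^2]\le M_z^2$. *)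

theory Defs
  imports "HOL-Probability.Probability"
begin

definition wnorm2 :: "real^'d \<Rightarrow> real^'d \<Rightarrow> real" where
  "wnorm2 v y = (\<Sum>i\<in>UNIV. v$i * (y$i)^2)"

definition is_wproj :: "(real^'d) set \<Rightarrow> real^'d \<Rightarrow> real^'d \<Rightarrow> real^'d \<Rightarrow> bool" where
  "is_wproj S v y p \<longleftrightarrow> p \<in> S \<and> (\<forall>s\<in>S. wnorm2 v (p - y) \<le> wnorm2 v (s - y))"

definition clip :: "real \<Rightarrow> real^'d \<Rightarrow> real^'d" where
  "clip \<theta> u = (1 / max 1 (norm u / \<theta>)) *\<^sub>R u"

primrec amom :: "real \<Rightarrow> (nat \<Rightarrow> real^'d) \<Rightarrow> nat \<Rightarrow> real^'d" where
  "amom b g 0 = 0"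
| "amom b g (Suc k) = b *\<^sub>R amom b g k + (1 - b) *\<^sub>R g (Suc k)"

primrec avar :: "real \<Rightarrow> real \<Rightarrow> (nat \<Rightarrow> real^'d) \<Rightarrow> nat \<Rightarrow> real^'d" where
  "avar b \<theta> g 0 = 0"
| "avar b \<theta> g (Suc k) = (\<chi> i. b * (avar b \<theta> g k $ i) + (1 - b) * ((clip \<theta> (g (Suc k))) $ i)^2)"

primrec avhat :: "real \<Rightarrow> real \<Rightarrow> (nat \<Rightarrow> real^'d) \<Rightarrow> nat \<Rightarrow> real^'d" where
  "avhat b \<theta> g 0 = 0"
| "avhat b \<theta> g (Suc k) = (\<chi> i. max (avhat b \<theta> g k $ i) (avar b \<theta> g (Suc k) $ i))"

definition subdiff_x :: "(real^'n) set \<Rightarrow> (real^'n \<Rightarrow> real^'m \<Rightarrow> real) \<Rightarrow> real^'n \<Rightarrow> real^'m \<Rightarrow> (real^'n) set" where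
  "subdiff_x X L x z = {g. \<forall>x'\<in>X. L x' z \<ge> L x z + g \<bullet> (x' - x)}"

definition superdiff_z :: "(real^'m) set \<Rightarrow> (real^'n \<Rightarrow> real^'m \<Rightarrow> real) \<Rightarrow> real^'n \<Rightarrow> real^'m \<Rightarrow> (real^'m) set" where
  "superdiff_z Z L x z = {g. \<forall>z'\<in>Z. L x z' \<le> L x z + g \<bullet> (z' - z)}"

definition hist_alg :: "'a measure \<Rightarrow> (nat \<Rightarrow> 'a \<Rightarrow> real^'n) \<Rightarrow> (nat \<Rightarrow> 'a \<Rightarrow> real^'m) \<Rightarrow> nat \<Rightarrow> 'a measure" where
  "hist_alg M x z k = sigma (space M)
     ({x j -` A \<inter> space M | j A. j \<in> {1..k} \<and> A \<in> sets borel} \<union>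
      {z j -` B \<inter> space M | j B. j \<in> {1..k} \<and> B \<in> sets borel})"

end

theory Submission
  imports Defs
begin



lemma clip_comp_sq:
  assumes "\<theta> > 0" shows "(clip \<theta> u $ i)^2 \<le> \<theta>^2"
proof -
  define \<mu> where "\<mu> = max 1 (norm u / \<theta>)"
  have mu1: "\<mu> \<ge> 1" and mu2: "\<mu> \<ge> norm u / \<theta>" unfolding \<mu>_def by auto
  have ci: "clip \<theta> u $ i = u $ i / \<mu>" unfolding clip_def \<mu>_def by simp
  have "\<bar>u $ i\<bar> \<le> norm u" by (rule component_le_norm_cart)
  also have "\<dots> \<le> \<mu> * \<theta>" using mu2 assms by (simp add: field_simps)
  finally have "\<bar>u $ i / \<mu>\<bar> \<le> \<theta>" using mu1 by (simp add: field_simps abs_divide)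
  then have "\<bar>clip \<theta> u $ i\<bar> \<le> \<theta>" using ci by simp
  then show ?thesis by (metis abs_ge_zero abs_le_square_iff power2_abs order_trans real_sqrt_abs real_sqrt_le_iff abs_of_pos assms)
qed

lemma avar_nonneg: "0 \<le> b \<Longrightarrow> b \<le> 1 \<Longrightarrow> avar b \<theta> g k $ i \<ge> 0"
  by (induction k) auto

lemma avar_le: "0 \<le> b \<Longrightarrow> b \<le> 1 \<Longrightarrow> \<theta> > 0 \<Longrightarrow> avar b \<theta> g k $ i \<le> \<theta>^2"
proof (induction k)
  case 0 then show ?case by simp
next
  case (Suc k)
  have "(clip \<theta> (g (Suc k)) $ i)^2 \<le> \<theta>^2" using Suc.prems clip_comp_sq by blast
  then have "b * (avar b \<theta> g k $ i) + (1 - b) * (clip \<theta> (g (Suc k)) $ i)^2 \<le> b * \<theta>^2 + (1-b) * \<theta>^2"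
    using Suc by (intro add_mono mult_left_mono) auto
  then show ?case by (simp add: algebra_simps)
qed

lemma avhat_nonneg: "0 \<le> b \<Longrightarrow> b \<le> 1 \<Longrightarrow> avhat b \<theta> g k $ i \<ge> 0"
  by (induction k) (auto simp: max_def)

lemma avhat_le: "0 \<le> b \<Longrightarrow> b \<le> 1 \<Longrightarrow> \<theta> > 0 \<Longrightarrow> avhat b \<theta> g k $ i \<le> \<theta>^2"
proof (induction k)
  case (Suc k) then show ?case using avar_le[of b \<theta> g "Suc k" i] by (simp del: avar.simps)
qed simp

lemma avhat_Suc_ge: "avhat b \<theta> g k $ i \<le> avhat b \<theta> g (Suc k) $ i"
  by simp

lemma avhat_mono: "k \<le> k' \<Longrightarrow> avhat b \<theta> g k $ i \<le> avhat b \<theta> g k' $ i"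
  by (induction k' rule: dec_induct) (auto intro: order_trans[OF _ avhat_Suc_ge])

lemma avhat_ge_clip: "0 \<le> b \<Longrightarrow> b \<le> 1 \<Longrightarrow> avhat b \<theta> g (Suc k) $ i \<ge> (1 - b) * (clip \<theta> (g (Suc k)) $ i)^2"
proof -
  assume "0 \<le> b" "b \<le> 1"
  then have "avar b \<theta> g (Suc k) $ i \<ge> (1 - b) * (clip \<theta> (g (Suc k)) $ i)^2"
    using avar_nonneg[of b \<theta> g k i] by simp
  then show ?thesis by simp
qed

lemma clip_zero: "\<theta> > 0 \<Longrightarrow> clip \<theta> u $ i = 0 \<longleftrightarrow> u $ i = 0"
  unfolding clip_def by auto

lemma amom_zero:
  assumes "0 < b2" "b2 < 1" "\<theta> > 0" "avhat b2 \<theta> g k $ i = 0"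
  shows "amom b g k $ i = 0"
  using assms(4)
proof (induction k)
  case 0 then show ?case by simp
next
  case (Suc k)
  have h0: "avhat b2 \<theta> g k $ i \<ge> 0" "avar b2 \<theta> g (Suc k) $ i \<ge> 0"
    using assms avhat_nonneg[of b2 \<theta> g k i] avar_nonneg[of b2 \<theta> g "Suc k" i] by (auto simp del: avar.simps)
  from Suc.prems have "max (avhat b2 \<theta> g k $ i) (avar b2 \<theta> g (Suc k) $ i) = 0" by simp
  then have z1: "avhat b2 \<theta> g k $ i = 0" and z2: "avar b2 \<theta> g (Suc k) $ i = 0"
    using h0 by (auto simp: max_def split: if_splits)
  have "avar b2 \<theta> g k $ i \<ge> 0" using avar_nonneg[of b2 \<theta> g k i] assms(1,2) by simp
  then have "(1 - b2) * (clip \<theta> (g (Suc k)) $ i)^2 = 0"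
    using z2 assms(1,2) by (simp add: add_nonneg_eq_0_iff)
  then have "g (Suc k) $ i = 0" using assms clip_zero by auto
  then show ?case using Suc.IH[OF z1] by simp
qed




lemma wproj_vi:
  fixes X :: "(real^'d) set"
  assumes P: "is_wproj X w yv p" and w: "\<And>i. w $ i \<ge> 0" and cvx: "convex X" and q: "q \<in> X"
  shows "(\<Sum>i\<in>UNIV. w $ i * (p $ i - yv $ i) * (q $ i - p $ i)) \<ge> 0"
proof (rule ccontr)
  define S where "S = (\<Sum>i\<in>UNIV. w $ i * (p $ i - yv $ i) * (q $ i - p $ i))"
  define T where "T = (\<Sum>i\<in>UNIV. w $ i * (q $ i - p $ i)^2)"
  assume "\<not> ?thesis"
  then have S0: "S < 0" unfolding S_def by simp
  have T0: "T \<ge> 0" unfolding T_def using w by (intro sum_nonneg) auto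
  have pX: "p \<in> X" and pmin: "\<And>s. s \<in> X \<Longrightarrow> wnorm2 w (p - yv) \<le> wnorm2 w (s - yv)"
    using P unfolding is_wproj_def by auto
  have key: "0 \<le> 2 * S + l * T" if l: "0 < l" "l \<le> 1" for l
  proof -
    have rX: "(1 - l) *\<^sub>R p + l *\<^sub>R q \<in> X"
      using cvx pX q l unfolding convex_def by auto
    have "wnorm2 w ((1 - l) *\<^sub>R p + l *\<^sub>R q - yv) = (\<Sum>i\<in>UNIV. w $ i * ((p $ i - yv $ i) + l * (q $ i - p $ i))^2)"
      unfolding wnorm2_def by (intro sum.cong) (auto simp: algebra_simps)
    also have "\<dots> = (\<Sum>i\<in>UNIV. w $ i * (p $ i - yv $ i)^2 + 2 * l * (w $ i * (p $ i - yv $ i) * (q $ i - p $ i)) + l^2 * (w $ i * (q $ i - p $ i)^2))"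
      by (intro sum.cong) (auto simp: power2_eq_square algebra_simps)
    also have "\<dots> = wnorm2 w (p - yv) + 2 * l * S + l^2 * T"
      unfolding wnorm2_def S_def T_def
      by (simp add: sum.distrib sum_distrib_left)
    finally have "wnorm2 w (p - yv) \<le> wnorm2 w (p - yv) + 2 * l * S + l^2 * T"
      using pmin[OF rX] by simp
    then have "0 \<le> l * (2 * S + l * T)" by (simp add: algebra_simps power2_eq_square)
    then show ?thesis using l by (simp add: zero_le_mult_iff)
  qed
  show False
  proof (cases "T = 0")
    case True then show False using key[of 1] S0 by simp
  next
    case False
    then have Tp: "T > 0" using T0 by simp
    define l where "l = min 1 (- S / T)"
    have l0: "0 < l" "l \<le> 1" unfolding l_def using S0 Tp by (auto simp: field_simps)
    have "l * T \<le> - S" unfolding l_def using Tp S0 by (auto simp: min_def field_simps)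
    then show False using key[OF l0] S0 by simp
  qed
qed




lemma l1_le_sqrt_card:
  fixes v :: "real^'d"
  shows "(\<Sum>i\<in>UNIV. \<bar>v $ i\<bar>) \<le> sqrt (real CARD('d)) * norm v"
proof -
  have "(\<Sum>i\<in>UNIV. \<bar>v $ i\<bar> * 1)^2 \<le> (\<Sum>i\<in>UNIV. (\<bar>v $ i\<bar>)^2) * (\<Sum>i\<in>(UNIV::'d set). 1^2)"
    by (rule Cauchy_Schwarz_ineq_sum)
  also have "(\<Sum>i\<in>UNIV. (\<bar>v $ i\<bar>)^2) = (norm v)^2"
    unfolding power2_norm_eq_inner inner_vec_def by (simp add: power2_eq_square)
  finally have "(\<Sum>i\<in>UNIV. \<bar>v $ i\<bar>)^2 \<le> (sqrt (real CARD('d)) * norm v)^2"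
    by (simp add: power_mult_distrib mult.commute)
  then show ?thesis
    by (rule power2_le_imp_le) simp
qed

lemma sum_swap_tri:
  fixes c \<alpha> :: "nat \<Rightarrow> real"
  shows "(1-b) * (\<Sum>j=1..t. c j * (\<Sum>k=j..t. \<alpha> k * b^(k-j)))
       = (\<Sum>k=1..t. \<alpha> k * ((1-b) * (\<Sum>j=1..k. b^(k-j) * c j)))"
proof (induction t)
  case 0 then show ?case by simp
next
  case (Suc t)
  have "(\<Sum>j=1..Suc t. c j * (\<Sum>k=j..Suc t. \<alpha> k * b^(k-j)))
      = (\<Sum>j=1..Suc t. c j * (\<Sum>k=j..t. \<alpha> k * b^(k-j)) + c j * (\<alpha> (Suc t) * b^(Suc t - j)))"
    by (intro sum.cong) (auto simp: algebra_simps)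
  also have "\<dots> = (\<Sum>j=1..Suc t. c j * (\<Sum>k=j..t. \<alpha> k * b^(k-j))) + \<alpha> (Suc t) * (\<Sum>j=1..Suc t. b^(Suc t - j) * c j)"
    by (simp add: sum.distrib sum_distrib_left algebra_simps)
  also have "(\<Sum>j=1..Suc t. c j * (\<Sum>k=j..t. \<alpha> k * b^(k-j))) = (\<Sum>j=1..t. c j * (\<Sum>k=j..t. \<alpha> k * b^(k-j)))"
    by simp
  finally have "(1-b) * (\<Sum>j=1..Suc t. c j * (\<Sum>k=j..Suc t. \<alpha> k * b^(k-j)))
     = (1-b) * (\<Sum>j=1..t. c j * (\<Sum>k=j..t. \<alpha> k * b^(k-j))) + \<alpha> (Suc t) * ((1-b) * (\<Sum>j=1..Suc t. b^(Suc t - j) * c j))"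
    by (simp only: distrib_left mult.left_commute)
  then show ?case using Suc.IH by simp
qed




locale apath =
  fixes X :: "(real^'d) set" and \<beta> \<beta>2 \<theta> B :: real and \<alpha> :: "nat \<Rightarrow> real" and K :: nat
    and g y :: "nat \<Rightarrow> real^'d" and xx :: "real^'d"
  assumes cvx: "convex X" and b1: "0 < \<beta>" "\<beta> < 1" and b2: "0 < \<beta>2" "\<beta>2 < 1" and th: "\<theta> > 0"
    and apos: "\<And>k. k \<in> {1..K} \<Longrightarrow> \<alpha> k > 0"
    and amono: "\<And>k k'. k \<in> {1..K} \<Longrightarrow> k' \<in> {1..K} \<Longrightarrow> k \<le> k' \<Longrightarrow> \<alpha> k' \<le> \<alpha> k"
    and y1: "y 1 \<in> X"
    and step: "\<And>k. k \<in> {1..K} \<Longrightarrow> is_wproj X (\<chi> i. sqrt (avhat \<beta>2 \<theta> g k $ i))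
         (y k - \<alpha> k *\<^sub>R (\<chi> i. amom \<beta> g k $ i / sqrt (avhat \<beta>2 \<theta> g k $ i))) (y (Suc k))"
    and Bd: "\<And>a b i. a \<in> X \<Longrightarrow> b \<in> X \<Longrightarrow> \<bar>a $ i - b $ i\<bar> \<le> B"
    and xx: "xx \<in> X"
begin

definition "m k = amom \<beta> g k"
definition "s k = (\<chi> i. sqrt (avhat \<beta>2 \<theta> g k $ i))"
definition "a k = (\<Sum>i\<in>UNIV. (m k $ i)^2 / s k $ i)"
definition "bb k = (\<Sum>i\<in>UNIV. (g k $ i)^2 / s k $ i)"
definition "d k j = (\<Sum>i\<in>UNIV. s k $ i * (y j $ i - xx $ i)^2)"
definition "c j = (y j - xx) \<bullet> g j"
definition "Q k = (1 - \<beta>) * (\<Sum>j=1..k. \<beta>^(k-j) * c j)"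
definition "P k = (y k - xx) \<bullet> m k"
definition "e k = (y k - y (Suc k)) \<bullet> m k"

primrec E :: "nat \<Rightarrow> real" where
  "E 0 = 0" | "E (Suc k) = \<beta> * (E k + e k)"

primrec H :: "nat \<Rightarrow> real" where
  "H 0 = 0" | "H (Suc k) = \<beta> * (H k + (\<alpha> k)^2 * a k)"

lemma s_nonneg: "s k $ i \<ge> 0"
  unfolding s_def using avhat_nonneg[of \<beta>2 \<theta> g k i] b2 by simp

lemma s_le: "s k $ i \<le> \<theta>"
proof -
  have "avhat \<beta>2 \<theta> g k $ i \<le> \<theta>^2" using avhat_le[of \<beta>2 \<theta> g k i] b2 th by simp
  then have "sqrt (avhat \<beta>2 \<theta> g k $ i) \<le> sqrt (\<theta>^2)" by (rule real_sqrt_le_mono)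
  then show ?thesis unfolding s_def using th by simp
qed

lemma s_mono: "k \<le> k' \<Longrightarrow> s k $ i \<le> s k' $ i"
  unfolding s_def by (simp add: avhat_mono)

lemma s0: "s 0 = 0"
  unfolding s_def by (simp add: vec_eq_iff)

lemma m0: "m 0 = 0"
  unfolding m_def by simp

lemma a0: "a 0 = 0"
  unfolding a_def m0 by simp

lemma m_zero: "s k $ i = 0 \<Longrightarrow> m k $ i = 0"
  unfolding s_def m_def using amom_zero[OF b2 th] avhat_nonneg[of \<beta>2] b2 by simp

lemma sm: "s k $ i * (m k $ i / s k $ i) = m k $ i"
  using m_zero[of k i] by (cases "s k $ i = 0") auto

lemma a_nonneg: "a k \<ge> 0"
  unfolding a_def using s_nonneg by (intro sum_nonneg) auto

lemma B0: "B \<ge> 0"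
  using Bd[OF xx xx] by simp

lemma step': "k \<in> {1..K} \<Longrightarrow> is_wproj X (s k) (y k - \<alpha> k *\<^sub>R (\<chi> i. m k $ i / s k $ i)) (y (Suc k))"
  using step unfolding s_def m_def by simp

lemma yX: "k \<in> {1..Suc K} \<Longrightarrow> y k \<in> X"
proof (induction k)
  case 0 then show ?case by simp
next
  case (Suc k)
  show ?case
  proof (cases "k = 0")
    case True then show ?thesis using y1 by simp
  next
    case False
    then have "k \<in> {1..K}" using Suc.prems by auto
    then show ?thesis using step'[of k] unfolding is_wproj_def by auto
  qed
qed

lemma e_bounds:
  assumes k: "k \<in> {1..K}"
  shows "e k \<ge> 0" "e k \<le> \<alpha> k * a k"
proof -
  define dl where "dl i = y k $ i - y (Suc k) $ i" for i
  have al: "\<alpha> k > 0" using apos k by simp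
  have vi: "(\<Sum>i\<in>UNIV. s k $ i * (y (Suc k) $ i - (y k - \<alpha> k *\<^sub>R (\<chi> i. m k $ i / s k $ i)) $ i) * (y k $ i - y (Suc k) $ i)) \<ge> 0"
    using wproj_vi[OF step'[OF k] _ cvx yX[of k]] s_nonneg k by auto
  have "(\<Sum>i\<in>UNIV. s k $ i * (y (Suc k) $ i - (y k - \<alpha> k *\<^sub>R (\<chi> i. m k $ i / s k $ i)) $ i) * (y k $ i - y (Suc k) $ i))
      = (\<Sum>i\<in>UNIV. \<alpha> k * (m k $ i * dl i) - s k $ i * (dl i)^2)"
  proof (intro sum.cong refl)
    fix i
    have "s k $ i * (y (Suc k) $ i - (y k - \<alpha> k *\<^sub>R (\<chi> i. m k $ i / s k $ i)) $ i) * (y k $ i - y (Suc k) $ i)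
        = \<alpha> k * ((s k $ i * (m k $ i / s k $ i)) * dl i) - s k $ i * (dl i)^2"
      unfolding dl_def by (simp add: algebra_simps power2_eq_square)
    then show "s k $ i * (y (Suc k) $ i - (y k - \<alpha> k *\<^sub>R (\<chi> i. m k $ i / s k $ i)) $ i) * (y k $ i - y (Suc k) $ i)
        = \<alpha> k * (m k $ i * dl i) - s k $ i * (dl i)^2" using sm by simp
  qed
  also have "\<dots> = \<alpha> k * (\<Sum>i\<in>UNIV. m k $ i * dl i) - (\<Sum>i\<in>UNIV. s k $ i * (dl i)^2)"
    by (simp add: sum_subtractf sum_distrib_left)
  also have "(\<Sum>i\<in>UNIV. m k $ i * dl i) = e k"
    unfolding e_def inner_vec_def dl_def by (simp add: algebra_simps)
  finally have main: "(\<Sum>i\<in>UNIV. s k $ i * (dl i)^2) \<le> \<alpha> k * e k" using vi by simp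
  have Sn: "(\<Sum>i\<in>UNIV. s k $ i * (dl i)^2) \<ge> 0" using s_nonneg by (intro sum_nonneg) auto
  have "0 \<le> \<alpha> k * e k" using main Sn by linarith
  then show "e k \<ge> 0" using al by (simp add: zero_le_mult_iff)
  have pw: "m k $ i * dl i \<le> \<alpha> k * ((m k $ i)^2 / s k $ i) / 2 + s k $ i * (dl i)^2 / (2 * \<alpha> k)" for i
  proof (cases "s k $ i = 0")
    case True then show ?thesis using m_zero by simp
  next
    case False
    then have sp: "s k $ i > 0" using s_nonneg[of k i] by simp
    have "0 \<le> (\<alpha> k * m k $ i - s k $ i * dl i)^2 / (2 * \<alpha> k * s k $ i)" using sp al by simp
    also have "(\<alpha> k * m k $ i - s k $ i * dl i)^2 / (2 * \<alpha> k * s k $ i)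
       = \<alpha> k * ((m k $ i)^2 / s k $ i) / 2 + s k $ i * (dl i)^2 / (2 * \<alpha> k) - m k $ i * dl i"
      using sp al by (simp add: field_simps power2_eq_square)
    finally show ?thesis by simp
  qed
  have "e k = (\<Sum>i\<in>UNIV. m k $ i * dl i)"
    unfolding e_def inner_vec_def dl_def by (simp add: algebra_simps)
  also have "\<dots> \<le> (\<Sum>i\<in>UNIV. \<alpha> k * ((m k $ i)^2 / s k $ i) / 2 + s k $ i * (dl i)^2 / (2 * \<alpha> k))"
    by (intro sum_mono pw)
  also have "\<dots> = \<alpha> k * a k / 2 + (\<Sum>i\<in>UNIV. s k $ i * (dl i)^2) / (2 * \<alpha> k)"
    unfolding a_def by (simp add: sum.distrib sum_distrib_left sum_divide_distrib)
  also have "\<dots> \<le> \<alpha> k * a k / 2 + (\<alpha> k * e k) / (2 * \<alpha> k)"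
    using main al by (simp add: divide_right_mono pos_divide_le_eq mult.commute)
  also have "\<dots> = \<alpha> k * a k / 2 + e k / 2" using al by simp
  finally show "e k \<le> \<alpha> k * a k" by simp
qed

lemma P_step:
  assumes k: "k \<in> {1..K}"
  shows "2 * \<alpha> k * P k \<le> d k k - d k (Suc k) + (\<alpha> k)^2 * a k"
proof -
  define yv where "yv = y k - \<alpha> k *\<^sub>R (\<chi> i. m k $ i / s k $ i)"
  define p where "p = y (Suc k)"
  have vi: "(\<Sum>i\<in>UNIV. s k $ i * (p $ i - yv $ i) * (xx $ i - p $ i)) \<ge> 0"
    using wproj_vi[OF step'[OF k] _ cvx xx] s_nonneg unfolding p_def yv_def by auto
  have pw: "s k $ i * (p $ i - xx $ i)^2 = s k $ i * (yv $ i - xx $ i)^2 - s k $ i * (yv $ i - p $ i)^2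
      - 2 * (s k $ i * (p $ i - yv $ i) * (xx $ i - p $ i))" for i
    by (simp add: algebra_simps power2_eq_square)
  have pw2: "s k $ i * (yv $ i - xx $ i)^2 = s k $ i * (y k $ i - xx $ i)^2 - 2 * \<alpha> k * (m k $ i * (y k $ i - xx $ i))
      + (\<alpha> k)^2 * ((m k $ i)^2 / s k $ i)" for i
  proof -
    have "s k $ i * (yv $ i - xx $ i)^2 = s k $ i * (y k $ i - xx $ i)^2 - 2 * \<alpha> k * ((s k $ i * (m k $ i / s k $ i)) * (y k $ i - xx $ i))
      + (\<alpha> k)^2 * (s k $ i * (m k $ i / s k $ i)^2)"
      unfolding yv_def by (simp add: algebra_simps power2_eq_square)
    also have "s k $ i * (m k $ i / s k $ i)^2 = (m k $ i)^2 / s k $ i"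
      by (cases "s k $ i = 0") (simp_all add: power2_eq_square)
    finally show ?thesis using sm by simp
  qed
  have "d k (Suc k) = (\<Sum>i\<in>UNIV. s k $ i * (y k $ i - xx $ i)^2 - 2 * \<alpha> k * (m k $ i * (y k $ i - xx $ i))
      + (\<alpha> k)^2 * ((m k $ i)^2 / s k $ i) - s k $ i * (yv $ i - p $ i)^2 - 2 * (s k $ i * (p $ i - yv $ i) * (xx $ i - p $ i)))"
    unfolding d_def p_def[symmetric] using pw pw2 by (intro sum.cong) auto
  also have "\<dots> = d k k - 2 * \<alpha> k * P k + (\<alpha> k)^2 * a k - (\<Sum>i\<in>UNIV. s k $ i * (yv $ i - p $ i)^2)
       - 2 * (\<Sum>i\<in>UNIV. s k $ i * (p $ i - yv $ i) * (xx $ i - p $ i))"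
    unfolding d_def P_def a_def inner_vec_def
    by (simp add: sum.distrib sum_subtractf sum_distrib_left algebra_simps)
  finally have eq: "d k (Suc k) = d k k - 2 * \<alpha> k * P k + (\<alpha> k)^2 * a k - (\<Sum>i\<in>UNIV. s k $ i * (yv $ i - p $ i)^2)
       - 2 * (\<Sum>i\<in>UNIV. s k $ i * (p $ i - yv $ i) * (xx $ i - p $ i))" .
  have "(\<Sum>i\<in>UNIV. s k $ i * (yv $ i - p $ i)^2) \<ge> 0" using s_nonneg by (intro sum_nonneg) auto
  then show ?thesis using eq vi by linarith
qed

end



context apath begin

lemma omb: "1 - \<beta> \<noteq> 0" using b1 by simp

lemma m_Suc: "m (Suc k) $ i = \<beta> * m k $ i + (1 - \<beta>) * g (Suc k) $ i"
  unfolding m_def by simp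

lemma m_Suc_vec: "m (Suc k) = \<beta> *\<^sub>R m k + (1 - \<beta>) *\<^sub>R g (Suc k)"
  unfolding m_def by simp

lemma a_rec: "a (Suc k) \<le> \<beta> * a k + (1 - \<beta>) * bb (Suc k)"
proof -
  have pw: "(m (Suc k) $ i)^2 / s (Suc k) $ i \<le> \<beta> * ((m k $ i)^2 / s k $ i) + (1 - \<beta>) * ((g (Suc k) $ i)^2 / s (Suc k) $ i)" for i
  proof -
    define M where "M = m k $ i"
    define G where "G = g (Suc k) $ i"
    have s01: "0 \<le> s k $ i" "s k $ i \<le> s (Suc k) $ i" using s_nonneg s_mono by auto
    have rhs0: "0 \<le> \<beta> * ((m k $ i)^2 / s k $ i) + (1 - \<beta>) * ((g (Suc k) $ i)^2 / s (Suc k) $ i)"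
      using b1 s_nonneg[of k i] s_nonneg[of "Suc k" i] by (intro add_nonneg_nonneg mult_nonneg_nonneg) auto
    show ?thesis
    proof (cases "s (Suc k) $ i = 0")
      case True then show ?thesis using rhs0 by simp
    next
      case False
      then have sp: "s (Suc k) $ i > 0" using s_nonneg[of "Suc k" i] by simp
      have cv: "(\<beta> * M + (1 - \<beta>) * G)^2 \<le> \<beta> * M^2 + (1 - \<beta>) * G^2"
      proof -
        have "\<beta> * M^2 + (1 - \<beta>) * G^2 - (\<beta> * M + (1 - \<beta>) * G)^2 = \<beta> * (1 - \<beta>) * (M - G)^2"
          by (simp add: power2_eq_square algebra_simps)
        moreover have "\<beta> * (1 - \<beta>) * (M - G)^2 \<ge> 0" using b1 by simp
        ultimately show ?thesis by linarith
      qed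
      have mm: "M^2 / s (Suc k) $ i \<le> M^2 / s k $ i"
      proof (cases "M = 0")
        case True then show ?thesis by simp
      next
        case False
        then have "s k $ i \<noteq> 0" using m_zero unfolding M_def by blast
        then have "s k $ i > 0" using s01 by simp
        then show ?thesis using s01 by (intro divide_left_mono) auto
      qed
      have "(m (Suc k) $ i)^2 / s (Suc k) $ i = (\<beta> * M + (1 - \<beta>) * G)^2 / s (Suc k) $ i"
        unfolding M_def G_def m_Suc by simp
      also have "\<dots> \<le> (\<beta> * M^2 + (1 - \<beta>) * G^2) / s (Suc k) $ i"
        using cv sp by (intro divide_right_mono) auto
      also have "\<dots> = \<beta> * (M^2 / s (Suc k) $ i) + (1 - \<beta>) * (G^2 / s (Suc k) $ i)"
        by (simp add: add_divide_distrib)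
      also have "\<dots> \<le> \<beta> * (M^2 / s k $ i) + (1 - \<beta>) * (G^2 / s (Suc k) $ i)"
        using mm b1 by (intro add_mono mult_left_mono) auto
      finally show ?thesis unfolding M_def G_def .
    qed
  qed
  have "a (Suc k) \<le> (\<Sum>i\<in>UNIV. \<beta> * ((m k $ i)^2 / s k $ i) + (1 - \<beta>) * ((g (Suc k) $ i)^2 / s (Suc k) $ i))"
    unfolding a_def by (intro sum_mono pw)
  also have "\<dots> = \<beta> * a k + (1 - \<beta>) * bb (Suc k)"
    unfolding a_def bb_def by (simp add: sum.distrib sum_distrib_left)
  finally show ?thesis .
qed

lemma bb_bound:
  "bb (Suc k) \<le> sqrt (real CARD('d)) * (\<theta>^2 + (norm (g (Suc k)))^2) / (\<theta> * sqrt (1 - \<beta>2))"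
proof -
  define G where "G = g (Suc k)"
  define \<mu> where "\<mu> = max 1 (norm G / \<theta>)"
  define r where "r = sqrt (1 - \<beta>2)"
  have rp: "r > 0" unfolding r_def using b2 by simp
  have mu1: "\<mu> \<ge> 1" unfolding \<mu>_def by simp
  have pw: "(G $ i)^2 / s (Suc k) $ i \<le> \<mu> / r * \<bar>G $ i\<bar>" for i
  proof (cases "G $ i = 0")
    case True then show ?thesis by simp
  next
    case False
    have ci: "clip \<theta> G $ i = G $ i / \<mu>" unfolding clip_def \<mu>_def by simp
    have "(1 - \<beta>2) * (clip \<theta> G $ i)^2 \<le> avhat \<beta>2 \<theta> g (Suc k) $ i"
      using avhat_ge_clip[of \<beta>2 \<theta> g k i] b2 unfolding G_def by simp
    then have "sqrt ((1 - \<beta>2) * (clip \<theta> G $ i)^2) \<le> s (Suc k) $ i"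
      unfolding s_def by (simp add: real_sqrt_le_mono)
    moreover have "sqrt ((1 - \<beta>2) * (clip \<theta> G $ i)^2) = r * (\<bar>G $ i\<bar> / \<mu>)"
      unfolding r_def ci using mu1 by (simp add: real_sqrt_mult abs_divide)
    ultimately have sl: "r * (\<bar>G $ i\<bar> / \<mu>) \<le> s (Suc k) $ i" by simp
    have pos: "r * (\<bar>G $ i\<bar> / \<mu>) > 0" using rp mu1 False by simp
    have sp: "s (Suc k) $ i > 0" using sl pos by linarith
    have "(G $ i)^2 / s (Suc k) $ i \<le> (G $ i)^2 / (r * (\<bar>G $ i\<bar> / \<mu>))"
      using sl pos mult_pos_pos[OF sp pos] by (intro divide_left_mono) auto
    also have "\<dots> = \<mu> / r * \<bar>G $ i\<bar>"
      using rp mu1 False by (simp add: field_simps power2_eq_square abs_mult_self_eq)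
    finally show ?thesis .
  qed
  have "bb (Suc k) \<le> (\<Sum>i\<in>UNIV. \<mu> / r * \<bar>G $ i\<bar>)"
    unfolding bb_def G_def[symmetric] by (intro sum_mono pw)
  also have "\<dots> = \<mu> / r * (\<Sum>i\<in>UNIV. \<bar>G $ i\<bar>)" by (simp add: sum_distrib_left)
  also have "\<dots> \<le> \<mu> / r * (sqrt (real CARD('d)) * norm G)"
    using l1_le_sqrt_card[of G] rp mu1 by (intro mult_left_mono) auto
  also have "\<dots> = sqrt (real CARD('d)) * (\<mu> * norm G) / r" by simp
  also have "\<dots> \<le> sqrt (real CARD('d)) * ((\<theta>^2 + (norm G)^2) / \<theta>) / r"
  proof -
    have "\<mu> * norm G \<le> (\<theta>^2 + (norm G)^2) / \<theta>"
    proof (cases "norm G / \<theta> \<le> 1")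
      case True
      then have "\<mu> = 1" unfolding \<mu>_def by simp
      moreover have "norm G \<le> \<theta>" using True th by (simp add: field_simps)
      ultimately show ?thesis using th mult_left_mono[of "norm G" \<theta> \<theta>]
        by (simp add: field_simps power2_eq_square add_increasing2)
    next
      case False
      then have "\<mu> = norm G / \<theta>" unfolding \<mu>_def by simp
      then have "\<mu> * norm G = (norm G)^2 / \<theta>" by (simp add: power2_eq_square)
      also have "\<dots> \<le> (\<theta>^2 + (norm G)^2) / \<theta>" using th by (intro divide_right_mono) auto
      finally show ?thesis .
    qed
    then show ?thesis using rp by (intro divide_right_mono mult_left_mono) auto
  qed
  also have "\<dots> = sqrt (real CARD('d)) * (\<theta>^2 + (norm (g (Suc k)))^2) / (\<theta> * sqrt (1 - \<beta>2))"
    unfolding r_def G_def by simp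
  finally show ?thesis .
qed

lemma Q_Suc: "Q (Suc k) = \<beta> * Q k + (1 - \<beta>) * c (Suc k)"
proof -
  have "(\<Sum>j=1..Suc k. \<beta>^(Suc k - j) * c j) = (\<Sum>j=1..k. \<beta>^(Suc k - j) * c j) + c (Suc k)"
    by simp
  also have "(\<Sum>j=1..k. \<beta>^(Suc k - j) * c j) = \<beta> * (\<Sum>j=1..k. \<beta>^(k - j) * c j)"
    unfolding sum_distrib_left by (intro sum.cong) (auto simp: Suc_diff_le)
  finally show ?thesis unfolding Q_def by (simp add: algebra_simps)
qed

lemma QPE: "Q k = P k + E k"
proof (induction k)
  case 0 then show ?case unfolding Q_def P_def by (simp add: m0)
next
  case (Suc k)
  define w where "w = (y (Suc k) - xx) \<bullet> m k"
  have P1: "P (Suc k) = \<beta> * w + (1 - \<beta>) * c (Suc k)"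
    unfolding P_def c_def m_Suc_vec w_def by (simp add: inner_add_right)
  have e1: "e k = P k - w"
    unfolding e_def P_def w_def by (simp add: inner_diff_left)
  have "Q (Suc k) = \<beta> * (P k + E k) + (1 - \<beta>) * c (Suc k)" using Suc.IH Q_Suc by simp
  also have "\<dots> = P (Suc k) + \<beta> * (E k + e k)" unfolding P1 e1 by (simp add: algebra_simps)
  finally show ?case by simp
qed

lemma e0: "e 0 = 0" unfolding e_def m0 by simp

lemma E_nonneg: "k \<le> Suc K \<Longrightarrow> E k \<ge> 0"
proof (induction k)
  case 0 then show ?case by simp
next
  case (Suc k)
  have "e k \<ge> 0"
  proof (cases "k = 0")
    case True then show ?thesis using e0 by simp
  next
    case False then show ?thesis using e_bounds(1)[of k] Suc.prems by auto
  qed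
  then show ?case using Suc b1 by simp
qed

lemma H_nonneg: "H k \<ge> 0"
  by (induction k) (use b1 a_nonneg in auto)

lemma alphaE: "k \<in> {1..K} \<Longrightarrow> \<alpha> k * E k \<le> H k"
proof (induction k)
  case 0 then show ?case by simp
next
  case (Suc k)
  show ?case
  proof (cases "k = 0")
    case True then show ?thesis using e0 a0 by simp
  next
    case False
    then have k: "k \<in> {1..K}" using Suc.prems by auto
    have am: "\<alpha> (Suc k) \<le> \<alpha> k" "\<alpha> (Suc k) > 0" using amono[of k "Suc k"] apos Suc.prems k by auto
    have En: "E k \<ge> 0" using E_nonneg k by auto
    have en: "e k \<ge> 0" "e k \<le> \<alpha> k * a k" using e_bounds k by auto
    have "\<alpha> (Suc k) * E (Suc k) = \<beta> * (\<alpha> (Suc k) * E k + \<alpha> (Suc k) * e k)" by (simp add: algebra_simps)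
    also have "\<dots> \<le> \<beta> * (\<alpha> k * E k + \<alpha> k * (\<alpha> k * a k))"
    proof -
      have "\<alpha> (Suc k) * E k \<le> \<alpha> k * E k" using am En by (simp add: mult_right_mono)
      moreover have "\<alpha> (Suc k) * e k \<le> \<alpha> k * (\<alpha> k * a k)"
        using am en apos[OF k] by (meson mult_mono less_imp_le order_trans)
      ultimately show ?thesis using b1 by (intro mult_left_mono) auto
    qed
    also have "\<dots> \<le> \<beta> * (H k + (\<alpha> k)^2 * a k)"
      using Suc.IH[OF k] b1 by (intro mult_left_mono) (auto simp: power2_eq_square)
    finally show ?thesis by simp
  qed
qed

lemma H_sum: "(\<Sum>k=1..t. H k) + H (Suc t) / (1 - \<beta>) = \<beta> / (1 - \<beta>) * (\<Sum>k=1..t. (\<alpha> k)^2 * a k)"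
proof (induction t)
  case 0 then show ?case using a0 by simp
next
  case (Suc t)
  have "(\<Sum>k=1..Suc t. H k) + H (Suc (Suc t)) / (1 - \<beta>)
      = ((\<Sum>k=1..t. H k) + H (Suc t) / (1 - \<beta>)) + (H (Suc t) + (H (Suc (Suc t)) - H (Suc t)) / (1 - \<beta>))"
    by (simp del: H.simps add: diff_divide_distrib)
  also have "H (Suc t) + (H (Suc (Suc t)) - H (Suc t)) / (1 - \<beta>) = \<beta> / (1 - \<beta>) * ((\<alpha> (Suc t))^2 * a (Suc t))"
  proof -
    have "H (Suc (Suc t)) = \<beta> * (H (Suc t) + (\<alpha> (Suc t))^2 * a (Suc t))" by (simp only: H.simps)
    then show ?thesis using omb by (simp del: H.simps add: field_simps)
  qed
  finally show ?case using Suc.IH by (simp add: algebra_simps)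
qed

lemma d_nonneg: "d k j \<ge> 0"
  unfolding d_def using s_nonneg by (intro sum_nonneg) auto

lemma tele: "t \<le> K \<Longrightarrow> (\<Sum>k=1..t. d k k - d k (Suc k)) + d t (Suc t) \<le> B^2 * (\<Sum>i\<in>UNIV. s t $ i)"
proof (induction t)
  case 0 then show ?case unfolding d_def s0 by simp
next
  case (Suc t)
  have yin: "y (Suc t) \<in> X" using yX Suc.prems by auto
  have "d (Suc t) (Suc t) - d t (Suc t) = (\<Sum>i\<in>UNIV. (s (Suc t) $ i - s t $ i) * (y (Suc t) $ i - xx $ i)^2)"
    unfolding d_def by (simp add: sum_subtractf algebra_simps)
  also have "\<dots> \<le> (\<Sum>i\<in>UNIV. (s (Suc t) $ i - s t $ i) * B^2)"
  proof (intro sum_mono mult_left_mono)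
    fix i
    have "\<bar>y (Suc t) $ i - xx $ i\<bar> \<le> B" using Bd[OF yin xx] .
    then have "\<bar>y (Suc t) $ i - xx $ i\<bar>^2 \<le> B^2" by (intro power_mono) auto
    then show "(y (Suc t) $ i - xx $ i)^2 \<le> B^2" by simp
    show "0 \<le> s (Suc t) $ i - s t $ i" using s_mono[of t "Suc t"] by simp
  qed
  also have "\<dots> = B^2 * (\<Sum>i\<in>UNIV. s (Suc t) $ i) - B^2 * (\<Sum>i\<in>UNIV. s t $ i)"
    by (simp add: sum_subtractf sum_distrib_left algebra_simps)
  finally have "d (Suc t) (Suc t) - d t (Suc t) \<le> B^2 * (\<Sum>i\<in>UNIV. s (Suc t) $ i) - B^2 * (\<Sum>i\<in>UNIV. s t $ i)" .
  then show ?case using Suc.IH Suc.prems by simp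
qed

lemma a_sum: "t \<le> K \<Longrightarrow> (\<Sum>k=1..t. (\<alpha> k)^2 * a k) + \<beta> / (1 - \<beta>) * ((\<alpha> t)^2 * a t) \<le> (\<Sum>k=1..t. (\<alpha> k)^2 * bb k)"
proof (induction t)
  case 0 then show ?case using a0 by simp
next
  case (Suc t)
  have aa: "(\<alpha> (Suc t))^2 * a t \<le> (\<alpha> t)^2 * a t"
  proof (cases "t = 0")
    case True then show ?thesis using a0 by simp
  next
    case False
    then have "t \<in> {1..K}" "Suc t \<in> {1..K}" using Suc.prems by auto
    then have "\<alpha> (Suc t) \<le> \<alpha> t" "0 < \<alpha> (Suc t)" using amono apos by auto
    then have "(\<alpha> (Suc t))^2 \<le> (\<alpha> t)^2" by (intro power_mono) auto
    then show ?thesis using a_nonneg by (intro mult_right_mono) auto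
  qed
  have ar: "(\<alpha> (Suc t))^2 * a (Suc t) \<le> (\<alpha> (Suc t))^2 * (\<beta> * a t + (1 - \<beta>) * bb (Suc t))"
    using a_rec by (intro mult_left_mono) auto
  have "(\<alpha> (Suc t))^2 * a (Suc t) + \<beta> / (1 - \<beta>) * ((\<alpha> (Suc t))^2 * a (Suc t)) - \<beta> / (1 - \<beta>) * ((\<alpha> t)^2 * a t)
      = ((\<alpha> (Suc t))^2 * a (Suc t) - \<beta> * ((\<alpha> t)^2 * a t)) / (1 - \<beta>)"
    using omb by (simp add: divide_simps) (simp add: algebra_simps)
  also have "\<dots> \<le> ((\<alpha> (Suc t))^2 * (\<beta> * a t + (1 - \<beta>) * bb (Suc t)) - \<beta> * ((\<alpha> (Suc t))^2 * a t)) / (1 - \<beta>)"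
  proof -
    have h: "\<beta> * ((\<alpha> (Suc t))^2 * a t) \<le> \<beta> * ((\<alpha> t)^2 * a t)" using aa b1 by (intro mult_left_mono) auto
    have "(\<alpha> (Suc t))^2 * a (Suc t) - \<beta> * ((\<alpha> t)^2 * a t) \<le> (\<alpha> (Suc t))^2 * (\<beta> * a t + (1 - \<beta>) * bb (Suc t)) - \<beta> * ((\<alpha> (Suc t))^2 * a t)"
      using h ar by linarith
    then show ?thesis using b1 by (intro divide_right_mono) auto
  qed
  also have "\<dots> = (\<alpha> (Suc t))^2 * bb (Suc t)" using omb by (simp add: field_simps)
  finally show ?case using Suc.IH Suc.prems by simp
qed

end



context apath begin

lemma coef: "1/2 + \<beta> / (1 - \<beta>) \<le> 1 / (2 * (1 - \<beta>)^2)"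
proof -
  have p: "1 - \<beta> > 0" using b1 by simp
  have "1/2 + \<beta> / (1 - \<beta>) = (1 - \<beta>^2) / (2 * (1 - \<beta>)^2)"
    using p by (simp add: divide_simps) (simp add: algebra_simps power2_eq_square)
  also have "\<dots> \<le> 1 / (2 * (1 - \<beta>)^2)" using p by (intro divide_right_mono) auto
  finally show ?thesis .
qed

theorem pathwise:
  assumes t: "t \<in> {1..K}"
  shows "(1 - \<beta>) * (\<Sum>j=1..t. c j * (\<Sum>k=j..t. \<alpha> k * \<beta>^(k-j)))
     \<le> real CARD('d) * \<theta> * B^2 / 2
        + (\<Sum>j=1..t. (\<alpha> j)^2 * (sqrt (real CARD('d)) * (\<theta>^2 + (norm (g j))^2)))
          / (2 * (1 - \<beta>)^2 * sqrt (1 - \<beta>2) * \<theta>)"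
proof -
  have tK: "t \<le> K" using t by simp
  have p: "1 - \<beta> > 0" using b1 by simp
  define r where "r = sqrt (1 - \<beta>2)"
  have rp: "r > 0" unfolding r_def using b2 by simp
  define A where "A = (\<Sum>k=1..t. (\<alpha> k)^2 * a k)"
  define W where "W = (\<Sum>j=1..t. (\<alpha> j)^2 * (sqrt (real CARD('d)) * (\<theta>^2 + (norm (g j))^2)))"
  have W0: "W \<ge> 0" unfolding W_def by (intro sum_nonneg) auto
  have L: "(1 - \<beta>) * (\<Sum>j=1..t. c j * (\<Sum>k=j..t. \<alpha> k * \<beta>^(k-j))) = (\<Sum>k=1..t. \<alpha> k * Q k)"
    unfolding Q_def by (rule sum_swap_tri)
  also have "\<dots> = (\<Sum>k=1..t. \<alpha> k * P k) + (\<Sum>k=1..t. \<alpha> k * E k)"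
    by (simp add: QPE distrib_left sum.distrib)
  finally have L2: "(1 - \<beta>) * (\<Sum>j=1..t. c j * (\<Sum>k=j..t. \<alpha> k * \<beta>^(k-j))) = (\<Sum>k=1..t. \<alpha> k * P k) + (\<Sum>k=1..t. \<alpha> k * E k)" .
  have hE: "(\<Sum>k=1..t. \<alpha> k * E k) \<le> (\<Sum>k=1..t. H k)"
    using tK by (intro sum_mono alphaE) auto
  have hH: "(\<Sum>k=1..t. H k) \<le> \<beta> / (1 - \<beta>) * A"
  proof -
    have "H (Suc t) / (1 - \<beta>) \<ge> 0" by (rule divide_nonneg_pos[OF H_nonneg p])
    then show ?thesis using H_sum[of t] unfolding A_def by linarith
  qed
  have hP: "2 * (\<Sum>k=1..t. \<alpha> k * P k) \<le> (\<Sum>k=1..t. d k k - d k (Suc k)) + A"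
  proof -
    have "2 * (\<Sum>k=1..t. \<alpha> k * P k) = (\<Sum>k=1..t. 2 * \<alpha> k * P k)"
      by (simp add: sum_distrib_left mult.assoc)
    also have "\<dots> \<le> (\<Sum>k=1..t. d k k - d k (Suc k) + (\<alpha> k)^2 * a k)"
      using tK by (intro sum_mono P_step) auto
    also have "\<dots> = (\<Sum>k=1..t. d k k - d k (Suc k)) + A"
      unfolding A_def by (simp add: sum.distrib)
    finally show ?thesis .
  qed
  have hT: "(\<Sum>k=1..t. d k k - d k (Suc k)) \<le> real CARD('d) * \<theta> * B^2"
  proof -
    have "(\<Sum>i\<in>UNIV. s t $ i) \<le> (\<Sum>i\<in>(UNIV::'d set). \<theta>)" by (intro sum_mono s_le)
    then have "(\<Sum>i\<in>UNIV. s t $ i) \<le> real CARD('d) * \<theta>" by simp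
    then have "B^2 * (\<Sum>i\<in>UNIV. s t $ i) \<le> B^2 * (real CARD('d) * \<theta>)" by (intro mult_left_mono) auto
    then show ?thesis using tele[OF tK] d_nonneg[of t "Suc t"] by (simp add: algebra_simps)
  qed
  have hA: "A \<le> W / (\<theta> * r)"
  proof -
    have "A \<le> (\<Sum>k=1..t. (\<alpha> k)^2 * bb k)"
    proof -
      have "\<beta> / (1 - \<beta>) * ((\<alpha> t)^2 * a t) \<ge> 0" using b1 p a_nonneg by simp
      then show ?thesis using a_sum[OF tK] unfolding A_def by linarith
    qed
    also have "\<dots> \<le> (\<Sum>k=1..t. (\<alpha> k)^2 * (sqrt (real CARD('d)) * (\<theta>^2 + (norm (g k))^2) / (\<theta> * r)))"
    proof (intro sum_mono mult_left_mono)
      fix k assume "k \<in> {1..t}"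
      then obtain k' where "k = Suc k'" by (cases k) auto
      then show "bb k \<le> sqrt (real CARD('d)) * (\<theta>^2 + (norm (g k))^2) / (\<theta> * r)"
        using bb_bound[of k'] unfolding r_def by simp
    qed simp
    also have "\<dots> = W / (\<theta> * r)"
      unfolding W_def by (simp add: sum_divide_distrib)
    finally show ?thesis .
  qed
  have "(1 - \<beta>) * (\<Sum>j=1..t. c j * (\<Sum>k=j..t. \<alpha> k * \<beta>^(k-j)))
      \<le> real CARD('d) * \<theta> * B^2 / 2 + (1/2 + \<beta> / (1 - \<beta>)) * A"
    using L2 hE hH hP hT by (simp add: algebra_simps)
  also have "\<dots> \<le> real CARD('d) * \<theta> * B^2 / 2 + (1/2 + \<beta> / (1 - \<beta>)) * (W / (\<theta> * r))"
    using hA p b1 by (intro add_left_mono mult_left_mono) auto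
  also have "\<dots> \<le> real CARD('d) * \<theta> * B^2 / 2 + 1 / (2 * (1 - \<beta>)^2) * (W / (\<theta> * r))"
    using coef W0 th rp by (intro add_left_mono mult_right_mono) auto
  also have "\<dots> = real CARD('d) * \<theta> * B^2 / 2 + W / (2 * (1 - \<beta>)^2 * sqrt (1 - \<beta>2) * \<theta>)"
    unfolding r_def by (simp add: field_simps)
  finally show ?thesis unfolding W_def .
qed

end



lemma expect_bound:
  fixes M :: "'a measure" and y g :: "nat \<Rightarrow> 'a \<Rightarrow> real^'d" and X :: "(real^'d) set"
    and \<Gamma> \<alpha> :: "nat \<Rightarrow> real" and cb C0 D Mg \<theta> :: real and t :: nat and xx :: "real^'d"
  assumes prob: "prob_space M" and cX: "compact X" and xx: "xx \<in> X"
    and ym: "\<And>j. y j \<in> borel_measurable M" and gm: "\<And>j. g j \<in> borel_measurable M"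
    and yX: "\<And>j \<omega>. j \<in> {1..t} \<Longrightarrow> \<omega> \<in> space M \<Longrightarrow> y j \<omega> \<in> X"
    and mom: "\<And>j. j \<in> {1..t} \<Longrightarrow> (\<integral>\<^sup>+ \<omega>. ennreal ((norm (g j \<omega>))^2) \<partial>M) \<le> ennreal (Mg^2)"
    and pw: "\<And>\<omega>. \<omega> \<in> space M \<Longrightarrow> cb * (\<Sum>j=1..t. ((y j \<omega> - xx) \<bullet> g j \<omega>) * \<Gamma> j)
         \<le> C0 + (\<Sum>j=1..t. (\<alpha> j)^2 * (sqrt (real CARD('d)) * (\<theta>^2 + (norm (g j \<omega>))^2))) / D"
    and D: "D > 0"
  shows "cb * (\<Sum>j=1..t. (\<integral>\<omega>. (y j \<omega> - xx) \<bullet> g j \<omega> \<partial>M) * \<Gamma> j)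
     \<le> C0 + sqrt (real CARD('d)) * (\<theta>^2 + Mg^2) * (\<Sum>j=1..t. (\<alpha> j)^2) / D"
proof -
  interpret prob_space M by (rule prob)
  obtain R where R: "\<And>a. a \<in> X \<Longrightarrow> norm a \<le> R"
    using compact_imp_bounded[OF cX] unfolding bounded_iff by blast
  define n where "n = sqrt (real CARD('d))"
  have n0: "n \<ge> 0" unfolding n_def by simp
  have sqi: "integrable M (\<lambda>\<omega>. (norm (g j \<omega>))^2)" and sqle: "(\<integral>\<omega>. (norm (g j \<omega>))^2 \<partial>M) \<le> Mg^2"
    if j: "j \<in> {1..t}" for j
  proof -
    have meas: "(\<lambda>\<omega>. (norm (g j \<omega>))^2) \<in> borel_measurable M" using gm by measurable
    have fin: "(\<integral>\<^sup>+ \<omega>. ennreal ((norm (g j \<omega>))^2) \<partial>M) < \<infinity>"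
      using mom[OF j] by (simp add: le_less_trans)
    show si: "integrable M (\<lambda>\<omega>. (norm (g j \<omega>))^2)"
      unfolding integrable_iff_bounded using meas fin by simp
    have "ennreal (\<integral>\<omega>. (norm (g j \<omega>))^2 \<partial>M) = (\<integral>\<^sup>+ \<omega>. ennreal ((norm (g j \<omega>))^2) \<partial>M)"
      using nn_integral_eq_integral[OF si] by simp
    also have "\<dots> \<le> ennreal (Mg^2)" by (rule mom[OF j])
    finally show "(\<integral>\<omega>. (norm (g j \<omega>))^2 \<partial>M) \<le> Mg^2"
      by (simp add: ennreal_le_iff)
  qed
  have ci: "integrable M (\<lambda>\<omega>. (y j \<omega> - xx) \<bullet> g j \<omega>)" if j: "j \<in> {1..t}" for j
  proof (rule Bochner_Integration.integrable_bound[where f="\<lambda>\<omega>. (2 * R) * (1 + (norm (g j \<omega>))^2)"])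
    show "integrable M (\<lambda>\<omega>. (2 * R) * (1 + (norm (g j \<omega>))^2))"
      using sqi[OF j] by simp
    show "(\<lambda>\<omega>. (y j \<omega> - xx) \<bullet> g j \<omega>) \<in> borel_measurable M" using ym gm by measurable
    show "AE \<omega> in M. norm ((y j \<omega> - xx) \<bullet> g j \<omega>) \<le> norm ((2 * R) * (1 + (norm (g j \<omega>))^2))"
    proof (rule AE_I2)
      fix \<omega> assume \<omega>: "\<omega> \<in> space M"
      have yb: "norm (y j \<omega> - xx) \<le> 2 * R"
        using R[OF yX[OF j \<omega>]] R[OF xx] norm_triangle_ineq4[of "y j \<omega>" xx] by linarith
      have R0: "R \<ge> 0" using R[OF xx] norm_ge_zero[of xx] by linarith
      have g1: "norm (g j \<omega>) \<le> 1 + (norm (g j \<omega>))^2"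
      proof (cases "norm (g j \<omega>) \<le> 1")
        case True then show ?thesis by (simp add: add_increasing2)
      next
        case False
        then have "norm (g j \<omega>) * 1 \<le> norm (g j \<omega>) * norm (g j \<omega>)" by (intro mult_left_mono) auto
        then show ?thesis by (simp add: power2_eq_square)
      qed
      have "norm ((y j \<omega> - xx) \<bullet> g j \<omega>) \<le> norm (y j \<omega> - xx) * norm (g j \<omega>)"
        using Cauchy_Schwarz_ineq2 by simp
      also have "\<dots> \<le> (2 * R) * (1 + (norm (g j \<omega>))^2)"
        using yb g1 R0 by (intro mult_mono) auto
      also have "\<dots> \<le> norm ((2 * R) * (1 + (norm (g j \<omega>))^2))" by simp
      finally show "norm ((y j \<omega> - xx) \<bullet> g j \<omega>) \<le> norm ((2 * R) * (1 + (norm (g j \<omega>))^2))" .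
    qed
  qed
  have "cb * (\<Sum>j=1..t. (\<integral>\<omega>. (y j \<omega> - xx) \<bullet> g j \<omega> \<partial>M) * \<Gamma> j)
      = (\<integral>\<omega>. cb * (\<Sum>j=1..t. ((y j \<omega> - xx) \<bullet> g j \<omega>) * \<Gamma> j) \<partial>M)"
  proof -
    have "(\<integral>\<omega>. (\<Sum>j=1..t. ((y j \<omega> - xx) \<bullet> g j \<omega>) * \<Gamma> j) \<partial>M)
        = (\<Sum>j=1..t. (\<integral>\<omega>. ((y j \<omega> - xx) \<bullet> g j \<omega>) * \<Gamma> j \<partial>M))"
      by (rule Bochner_Integration.integral_sum[where f="\<lambda>j \<omega>. ((y j \<omega> - xx) \<bullet> g j \<omega>) * \<Gamma> j"]) (use ci in auto)
    then show ?thesis by simp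
  qed
  also have "\<dots> \<le> (\<integral>\<omega>. C0 + (\<Sum>j=1..t. (\<alpha> j)^2 * (n * (\<theta>^2 + (norm (g j \<omega>))^2))) / D \<partial>M)"
  proof (rule integral_mono)
    show "integrable M (\<lambda>\<omega>. cb * (\<Sum>j=1..t. ((y j \<omega> - xx) \<bullet> g j \<omega>) * \<Gamma> j))"
      using ci by (intro integrable_mult_right integrable_sum integrable_mult_left) auto
    show "integrable M (\<lambda>\<omega>. C0 + (\<Sum>j=1..t. (\<alpha> j)^2 * (n * (\<theta>^2 + (norm (g j \<omega>))^2))) / D)"
      using sqi by (intro Bochner_Integration.integrable_add integrable_divide integrable_sum integrable_mult_right) auto
    show "\<And>\<omega>. \<omega> \<in> space M \<Longrightarrow> cb * (\<Sum>j=1..t. ((y j \<omega> - xx) \<bullet> g j \<omega>) * \<Gamma> j)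
        \<le> C0 + (\<Sum>j=1..t. (\<alpha> j)^2 * (n * (\<theta>^2 + (norm (g j \<omega>))^2))) / D"
      using pw unfolding n_def by simp
  qed
  also have "\<dots> = C0 + (\<Sum>j=1..t. (\<alpha> j)^2 * (n * (\<theta>^2 + (\<integral>\<omega>. (norm (g j \<omega>))^2 \<partial>M)))) / D"
  proof -
    have i1: "integrable M (\<lambda>\<omega>. (\<Sum>j=1..t. (\<alpha> j)^2 * (n * (\<theta>^2 + (norm (g j \<omega>))^2))) / D)"
      using sqi by (intro integrable_divide integrable_sum integrable_mult_right) auto
    have "(\<integral>\<omega>. C0 + (\<Sum>j=1..t. (\<alpha> j)^2 * (n * (\<theta>^2 + (norm (g j \<omega>))^2))) / D \<partial>M)
        = C0 + (\<integral>\<omega>. (\<Sum>j=1..t. (\<alpha> j)^2 * (n * (\<theta>^2 + (norm (g j \<omega>))^2))) \<partial>M) / D"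
      using i1 prob_space by (simp add: Bochner_Integration.integral_add)
    also have "(\<integral>\<omega>. (\<Sum>j=1..t. (\<alpha> j)^2 * (n * (\<theta>^2 + (norm (g j \<omega>))^2))) \<partial>M)
        = (\<Sum>j=1..t. (\<integral>\<omega>. (\<alpha> j)^2 * (n * (\<theta>^2 + (norm (g j \<omega>))^2)) \<partial>M))"
      by (rule Bochner_Integration.integral_sum[where f="\<lambda>j \<omega>. (\<alpha> j)^2 * (n * (\<theta>^2 + (norm (g j \<omega>))^2))"]) (use sqi in auto)
    also have "\<dots> = (\<Sum>j=1..t. (\<alpha> j)^2 * (n * (\<theta>^2 + (\<integral>\<omega>. (norm (g j \<omega>))^2 \<partial>M))))"
    proof (intro sum.cong refl)
      fix j assume j: "j \<in> {1..t}"
      have "(\<integral>\<omega>. \<theta>^2 + (norm (g j \<omega>))^2 \<partial>M) = \<theta>^2 + (\<integral>\<omega>. (norm (g j \<omega>))^2 \<partial>M)"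
        using sqi[OF j] prob_space by (simp add: Bochner_Integration.integral_add)
      then show "(\<integral>\<omega>. (\<alpha> j)^2 * (n * (\<theta>^2 + (norm (g j \<omega>))^2)) \<partial>M)
          = (\<alpha> j)^2 * (n * (\<theta>^2 + (\<integral>\<omega>. (norm (g j \<omega>))^2 \<partial>M)))" by simp
    qed
    finally show ?thesis .
  qed
  also have "\<dots> \<le> C0 + (\<Sum>j=1..t. (\<alpha> j)^2 * (n * (\<theta>^2 + Mg^2))) / D"
    using sqle n0 D by (intro add_left_mono divide_right_mono sum_mono mult_left_mono) auto
  also have "\<dots> = C0 + sqrt (real CARD('d)) * (\<theta>^2 + Mg^2) * (\<Sum>j=1..t. (\<alpha> j)^2) / D"
  proof -
    have "(\<Sum>j=1..t. (\<alpha> j)^2 * (n * (\<theta>^2 + Mg^2))) = n * (\<theta>^2 + Mg^2) * (\<Sum>j=1..t. (\<alpha> j)^2)"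
      by (simp add: sum_distrib_right mult.commute)
    then show ?thesis unfolding n_def by simp
  qed
  finally show ?thesis .
qed




lemma clip_neg: "clip \<theta> (- u) = - clip \<theta> u"
  unfolding clip_def by simp

lemma avar_neg: "avar b \<theta> (\<lambda>j. - g j) k = avar b \<theta> g k"
  by (induction k) (simp_all add: clip_neg)

lemma avhat_neg: "avhat b \<theta> (\<lambda>j. - g j) k = avhat b \<theta> g k"
  by (induction k) (simp_all add: avar_neg del: avar.simps)

lemma amom_neg: "amom b (\<lambda>j. - g j) k = - amom b g k"
  by (induction k) (simp_all add: algebra_simps)

theorem lemma11:
  fixes M :: "'a measure"
    and X :: "(real^'n) set" and Z :: "(real^'m) set"
    and L :: "real^'n \<Rightarrow> real^'m \<Rightarrow> real"
    and K :: nat and \<beta>1 \<beta>2 \<theta> :: real and \<alpha> \<rho> :: "nat \<Rightarrow> real"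
    and x1 :: "real^'n" and z1 :: "real^'m"
    and u :: "nat \<Rightarrow> 'a \<Rightarrow> real^'n" and w :: "nat \<Rightarrow> 'a \<Rightarrow> real^'m"
    and x :: "nat \<Rightarrow> 'a \<Rightarrow> real^'n" and z :: "nat \<Rightarrow> 'a \<Rightarrow> real^'m"
    and Bx Bz Mx Mz :: real
    and t :: nat and xx :: "real^'n" and zz :: "real^'m"
  assumes prob: "prob_space M"
    and X: "compact X" "convex X" and Z: "compact Z" "convex Z"
    and L_convex: "\<And>z'. z' \<in> Z \<Longrightarrow> convex_on X (\<lambda>x'. L x' z')"
    and L_concave: "\<And>x'. x' \<in> X \<Longrightarrow> convex_on Z (\<lambda>z'. - L x' z')"
    and beta1: "0 < \<beta>1" "\<beta>1 < 1" and beta2: "0 < \<beta>2" "\<beta>2 < 1" and theta: "\<theta> > 0"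
    and alpha_pos: "\<And>k. k \<in> {1..K} \<Longrightarrow> \<alpha> k > 0"
    and alpha_mono: "\<And>k k'. k \<in> {1..K} \<Longrightarrow> k' \<in> {1..K} \<Longrightarrow> k \<le> k' \<Longrightarrow> \<alpha> k' \<le> \<alpha> k"
    and rho_pos: "\<And>k. k \<in> {1..K} \<Longrightarrow> \<rho> k > 0"
    and rho_mono: "\<And>k k'. k \<in> {1..K} \<Longrightarrow> k' \<in> {1..K} \<Longrightarrow> k \<le> k' \<Longrightarrow> \<rho> k' \<le> \<rho> k"
    and x1: "x1 \<in> X" and z1: "z1 \<in> Z"
    and x_init: "\<And>\<omega>. \<omega> \<in> space M \<Longrightarrow> x 1 \<omega> = x1"
    and z_init: "\<And>\<omega>. \<omega> \<in> space M \<Longrightarrow> z 1 \<omega> = z1"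
    and x_meas: "\<And>k. x k \<in> borel_measurable M"
    and z_meas: "\<And>k. z k \<in> borel_measurable M"
    and u_meas: "\<And>k. u k \<in> borel_measurable M"
    and w_meas: "\<And>k. w k \<in> borel_measurable M"
    and x_step: "\<And>k \<omega>. k \<in> {1..K} \<Longrightarrow> \<omega> \<in> space M \<Longrightarrow>
       is_wproj X (\<chi> i. sqrt (avhat \<beta>2 \<theta> (\<lambda>j. u j \<omega>) k $ i))
         (x k \<omega> - \<alpha> k *\<^sub>R (\<chi> i. amom \<beta>1 (\<lambda>j. u j \<omega>) k $ i / sqrt (avhat \<beta>2 \<theta> (\<lambda>j. u j \<omega>) k $ i)))
         (x (Suc k) \<omega>)"
    and z_step: "\<And>k \<omega>. k \<in> {1..K} \<Longrightarrow> \<omega> \<in> space M \<Longrightarrow>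
       is_wproj Z (\<chi> i. sqrt (avhat \<beta>2 \<theta> (\<lambda>j. w j \<omega>) k $ i))
         (z k \<omega> + \<rho> k *\<^sub>R (\<chi> i. amom \<beta>1 (\<lambda>j. w j \<omega>) k $ i / sqrt (avhat \<beta>2 \<theta> (\<lambda>j. w j \<omega>) k $ i)))
         (z (Suc k) \<omega>)"
    and B1x: "\<And>a b i. a \<in> X \<Longrightarrow> b \<in> X \<Longrightarrow> \<bar>a $ i - b $ i\<bar> \<le> Bx"
    and B1z: "\<And>a b i. a \<in> Z \<Longrightarrow> b \<in> Z \<Longrightarrow> \<bar>a $ i - b $ i\<bar> \<le> Bz"
    and B2u: "\<And>k. k \<in> {1..K} \<Longrightarrow>
       AE \<omega> in M. (\<chi> i. real_cond_exp M (hist_alg M x z k) (\<lambda>\<omega>'. u k \<omega>' $ i) \<omega>)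
                     \<in> subdiff_x X L (x k \<omega>) (z k \<omega>)"
    and B2u_mom: "\<And>k. k \<in> {1..K} \<Longrightarrow> (\<integral>\<^sup>+ \<omega>. ennreal ((norm (u k \<omega>))^2) \<partial>M) \<le> ennreal (Mx^2)"
    and B2w: "\<And>k. k \<in> {1..K} \<Longrightarrow>
       AE \<omega> in M. (\<chi> i. real_cond_exp M (hist_alg M x z k) (\<lambda>\<omega>'. w k \<omega>' $ i) \<omega>)
                     \<in> superdiff_z Z L (x k \<omega>) (z k \<omega>)"
    and B2w_mom: "\<And>k. k \<in> {1..K} \<Longrightarrow> (\<integral>\<^sup>+ \<omega>. ennreal ((norm (w k \<omega>))^2) \<partial>M) \<le> ennreal (Mz^2)"
    and t: "t \<in> {1..K}" and xx: "xx \<in> X" and zz: "zz \<in> Z"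
  shows "(1 - \<beta>1) * (\<Sum>j=1..t. (\<integral>\<omega>. (x j \<omega> - xx) \<bullet> u j \<omega> \<partial>M) * (\<Sum>k=j..t. \<alpha> k * \<beta>1 ^ (k - j)))
           \<le> real CARD('n) * \<theta> * Bx^2 / 2
              + sqrt (real CARD('n)) * (\<theta>^2 + Mx^2) * (\<Sum>j=1..t. (\<alpha> j)^2)
                / (2 * (1 - \<beta>1)^2 * sqrt (1 - \<beta>2) * \<theta>)
       \<and> (1 - \<beta>1) * (\<Sum>j=1..t. (\<integral>\<omega>. (z j \<omega> - zz) \<bullet> w j \<omega> \<partial>M) * (\<Sum>k=j..t. \<rho> k * \<beta>1 ^ (k - j)))
           \<ge> - (real CARD('m) * \<theta> * Bz^2 / 2)
              - sqrt (real CARD('m)) * (\<theta>^2 + Mz^2) * (\<Sum>j=1..t. (\<rho> j)^2)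
                / (2 * (1 - \<beta>1)^2 * sqrt (1 - \<beta>2) * \<theta>)"
proof -
  note cv = X(2) Z(2)
  have bb1: "0 < \<beta>1" "\<beta>1 < 1" using beta1 by auto
  have DX: "2 * (1 - \<beta>1)^2 * sqrt (1 - \<beta>2) * \<theta> > 0" using beta1 beta2 theta by simp
  define \<Gamma> where "\<Gamma> j = (\<Sum>k=j..t. \<alpha> k * \<beta>1 ^ (k - j))" for j
  define \<Gamma>' where "\<Gamma>' j = (\<Sum>k=j..t. \<rho> k * \<beta>1 ^ (k - j))" for j
  have xpath: "(1 - \<beta>1) * (\<Sum>j=1..t. ((x j \<omega> - xx) \<bullet> u j \<omega>) * \<Gamma> j)
      \<le> real CARD('n) * \<theta> * Bx^2 / 2 + (\<Sum>j=1..t. (\<alpha> j)^2 * (sqrt (real CARD('n)) * (\<theta>^2 + (norm (u j \<omega>))^2)))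
          / (2 * (1 - \<beta>1)^2 * sqrt (1 - \<beta>2) * \<theta>)"
    and xin: "\<And>j. j \<in> {1..t} \<Longrightarrow> x j \<omega> \<in> X"
    if \<omega>: "\<omega> \<in> space M" for \<omega>
  proof -
    interpret P: apath X \<beta>1 \<beta>2 \<theta> Bx \<alpha> K "\<lambda>j. u j \<omega>" "\<lambda>j. x j \<omega>" xx
      using X(2) beta1 beta2 theta alpha_pos alpha_mono x1 x_init[OF \<omega>] x_step[OF _ \<omega>] B1x xx
      by unfold_locales auto
    show "(1 - \<beta>1) * (\<Sum>j=1..t. ((x j \<omega> - xx) \<bullet> u j \<omega>) * \<Gamma> j)
      \<le> real CARD('n) * \<theta> * Bx^2 / 2 + (\<Sum>j=1..t. (\<alpha> j)^2 * (sqrt (real CARD('n)) * (\<theta>^2 + (norm (u j \<omega>))^2)))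
          / (2 * (1 - \<beta>1)^2 * sqrt (1 - \<beta>2) * \<theta>)"
      using P.pathwise[OF t] unfolding P.c_def \<Gamma>_def by simp
    show "\<And>j. j \<in> {1..t} \<Longrightarrow> x j \<omega> \<in> X" using P.yX t by auto
  qed
  have part1: "(1 - \<beta>1) * (\<Sum>j=1..t. (\<integral>\<omega>. (x j \<omega> - xx) \<bullet> u j \<omega> \<partial>M) * \<Gamma> j)
      \<le> real CARD('n) * \<theta> * Bx^2 / 2 + sqrt (real CARD('n)) * (\<theta>^2 + Mx^2) * (\<Sum>j=1..t. (\<alpha> j)^2)
          / (2 * (1 - \<beta>1)^2 * sqrt (1 - \<beta>2) * \<theta>)"
    by (rule expect_bound[OF prob X(1) xx x_meas u_meas xin B2u_mom xpath DX]) (use t in auto)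
  define w' where "w' j \<omega> = - w j \<omega>" for j \<omega>
  have zpath: "(1 - \<beta>1) * (\<Sum>j=1..t. ((z j \<omega> - zz) \<bullet> w' j \<omega>) * \<Gamma>' j)
      \<le> real CARD('m) * \<theta> * Bz^2 / 2 + (\<Sum>j=1..t. (\<rho> j)^2 * (sqrt (real CARD('m)) * (\<theta>^2 + (norm (w' j \<omega>))^2)))
          / (2 * (1 - \<beta>1)^2 * sqrt (1 - \<beta>2) * \<theta>)"
    and zin: "\<And>j. j \<in> {1..t} \<Longrightarrow> z j \<omega> \<in> Z"
    if \<omega>: "\<omega> \<in> space M" for \<omega>
  proof -
    have zs: "is_wproj Z (\<chi> i. sqrt (avhat \<beta>2 \<theta> (\<lambda>j. w' j \<omega>) k $ i))
         (z k \<omega> - \<rho> k *\<^sub>R (\<chi> i. amom \<beta>1 (\<lambda>j. w' j \<omega>) k $ i / sqrt (avhat \<beta>2 \<theta> (\<lambda>j. w' j \<omega>) k $ i)))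
         (z (Suc k) \<omega>)" if k: "k \<in> {1..K}" for k
    proof -
      have e1: "avhat \<beta>2 \<theta> (\<lambda>j. w' j \<omega>) k = avhat \<beta>2 \<theta> (\<lambda>j. w j \<omega>) k"
        unfolding w'_def by (rule avhat_neg)
      have e2: "amom \<beta>1 (\<lambda>j. w' j \<omega>) k = - amom \<beta>1 (\<lambda>j. w j \<omega>) k"
        unfolding w'_def by (rule amom_neg)
      have e3: "z k \<omega> - \<rho> k *\<^sub>R (\<chi> i. (- amom \<beta>1 (\<lambda>j. w j \<omega>) k) $ i / sqrt (avhat \<beta>2 \<theta> (\<lambda>j. w j \<omega>) k $ i))
          = z k \<omega> + \<rho> k *\<^sub>R (\<chi> i. amom \<beta>1 (\<lambda>j. w j \<omega>) k $ i / sqrt (avhat \<beta>2 \<theta> (\<lambda>j. w j \<omega>) k $ i))"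
        by (simp add: vec_eq_iff)
      show ?thesis unfolding e1 e2 e3 using z_step[OF k \<omega>] .
    qed
    interpret P: apath Z \<beta>1 \<beta>2 \<theta> Bz \<rho> K "\<lambda>j. w' j \<omega>" "\<lambda>j. z j \<omega>" zz
      using Z(2) beta1 beta2 theta rho_pos rho_mono z1 z_init[OF \<omega>] zs B1z zz
      by unfold_locales auto
    show "(1 - \<beta>1) * (\<Sum>j=1..t. ((z j \<omega> - zz) \<bullet> w' j \<omega>) * \<Gamma>' j)
      \<le> real CARD('m) * \<theta> * Bz^2 / 2 + (\<Sum>j=1..t. (\<rho> j)^2 * (sqrt (real CARD('m)) * (\<theta>^2 + (norm (w' j \<omega>))^2)))
          / (2 * (1 - \<beta>1)^2 * sqrt (1 - \<beta>2) * \<theta>)"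
      using P.pathwise[OF t] unfolding P.c_def \<Gamma>'_def by simp
    show "\<And>j. j \<in> {1..t} \<Longrightarrow> z j \<omega> \<in> Z" using P.yX t by auto
  qed
  have w'm: "\<And>j. w' j \<in> borel_measurable M" unfolding w'_def using w_meas by measurable
  have w'mom: "\<And>j. j \<in> {1..t} \<Longrightarrow> (\<integral>\<^sup>+ \<omega>. ennreal ((norm (w' j \<omega>))^2) \<partial>M) \<le> ennreal (Mz^2)"
    unfolding w'_def using B2w_mom t by auto
  have part2: "(1 - \<beta>1) * (\<Sum>j=1..t. (\<integral>\<omega>. (z j \<omega> - zz) \<bullet> w' j \<omega> \<partial>M) * \<Gamma>' j)
      \<le> real CARD('m) * \<theta> * Bz^2 / 2 + sqrt (real CARD('m)) * (\<theta>^2 + Mz^2) * (\<Sum>j=1..t. (\<rho> j)^2)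
          / (2 * (1 - \<beta>1)^2 * sqrt (1 - \<beta>2) * \<theta>)"
    by (rule expect_bound[OF prob Z(1) zz z_meas w'm zin w'mom zpath DX])
  have neg: "(\<integral>\<omega>. (z j \<omega> - zz) \<bullet> w' j \<omega> \<partial>M) = - (\<integral>\<omega>. (z j \<omega> - zz) \<bullet> w j \<omega> \<partial>M)" for j
    unfolding w'_def by simp
  have part2': "(1 - \<beta>1) * (\<Sum>j=1..t. (\<integral>\<omega>. (z j \<omega> - zz) \<bullet> w' j \<omega> \<partial>M) * \<Gamma>' j)
      = - ((1 - \<beta>1) * (\<Sum>j=1..t. (\<integral>\<omega>. (z j \<omega> - zz) \<bullet> w j \<omega> \<partial>M) * \<Gamma>' j))"
    unfolding neg by (simp add: sum_negf)
  show ?thesis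
    using part1 part2[unfolded part2'] unfolding \<Gamma>_def \<Gamma>'_def by linarith
qed


end
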